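(* Consider the distributed detection model in the context with $N\ge 2$, and let $m=\frac{N}{2N-2}$. Suppose the fusion center uses the majority rule $K^*=\lceil\frac{N+1}{2}\rceil$ and that $\alpha<\min\{0.5-P_f,\;1-m/P_d\}$. Then for any fixed $P_{0,1}\in[0,1]$, the error probability $P_E$ is a quasi-convex function of $P_{1,0}\in[0,1]$.
   Context: Binary hypothesis test between $H_0$ and $H_1$ with priors $P_0,P_1\in(0,1)$, $P_0+P_1=1$. There are $N$ sensors; conditionally on the hypothesis, their local decisions $v_i\in\{0,1\}$ are i.i.d. with $P(v_i=1\mid H_1)=P_d$, $P(v_i=1\mid H_0)=P_f$, where $0<P_f<P_d<1$. Each sensor independently is Byzantine with probability $\alpha\in[0,1]$. Honest nodes send $u_i=v_i$; a Byzantine node sends $u_i=1$ with probability $P_{1,0}$ when $v_i=0$ and sends $u_i=0$ with probability $P_{0,1}$ when $v_i=1$. Hence conditionally on $H_j$ the $u_i$ are i.i.d. with $P(u_i=1\mid H_0)=\pi_{1,0}=\alpha(P_{1,0}(1-P_f)+(1-P_{0,1})P_f)+(1-\alpha)P_f$ and $P(u_i=1\mid H_1)=\pi_{1,1}=\alpha(P_{1,0}(1-P_d)+(1-P_{0,1})P_d)+(1-\alpha)P_d$. A $K$-out-of-$N$ fusion rule decides $H_1$ iff at least $K$ of the $u_i$ equal $1$; its global false alarm and detection probabilities are $Q_F=\sum_{i=K}^N\binom{N}{i}\pi_{1,0}^i(1-\pi_{1,0})^{N-i}$ and $Q_D=\sum_{i=K}^N\binom{N}{i}\pi_{1,1}^i(1-\pi_{1,1})^{N-i}$,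 and its error probability is $P_E=P_0Q_F+P_1(1-Q_D)$. A function $f$ on an interval is called quasi-convex if there is a point $x^*$ such that $f$ is non-increasing for $x\le x^*$ and non-decreasing for $x\ge x^*$ (this includes $f$ monotone on the whole interval). *)

theory Defs
  imports "HOL-Analysis.Analysis"
begin

definition pi10 :: "real \<Rightarrow> real \<Rightarrow> real \<Rightarrow> real \<Rightarrow> real" where
  "pi10 \<alpha> Pf P10 P01 =
     \<alpha> * (P10 * (1 - Pf) + (1 - P01) * Pf) + (1 - \<alpha>) * Pf"

definition pi11 :: "real \<Rightarrow> real \<Rightarrow> real \<Rightarrow> real \<Rightarrow> real" where
  "pi11 \<alpha> Pd P10 P01 =
     \<alpha> * (P10 * (1 - Pd) + (1 - P01) * Pd) + (1 - \<alpha>) * Pd"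

definition tail_binom :: "nat \<Rightarrow> nat \<Rightarrow> real \<Rightarrow> real" where
  "tail_binom N K p = (\<Sum>i=K..N. real (N choose i) * p ^ i * (1 - p) ^ (N - i))"

definition QF :: "nat \<Rightarrow> nat \<Rightarrow> real \<Rightarrow> real \<Rightarrow> real \<Rightarrow> real \<Rightarrow> real" where
  "QF N K \<alpha> Pf P10 P01 = tail_binom N K (pi10 \<alpha> Pf P10 P01)"

definition QD :: "nat \<Rightarrow> nat \<Rightarrow> real \<Rightarrow> real \<Rightarrow> real \<Rightarrow> real \<Rightarrow> real" where
  "QD N K \<alpha> Pd P10 P01 = tail_binom N K (pi11 \<alpha> Pd P10 P01)"

definition PE :: "real \<Rightarrow> real \<Rightarrow> nat \<Rightarrow> nat \<Rightarrow> real \<Rightarrow> real \<Rightarrow> real \<Rightarrow> real \<Rightarrow> real \<Rightarrow> real" where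
  "PE P0 P1 N K \<alpha> Pf Pd P10 P01 =
     P0 * QF N K \<alpha> Pf P10 P01 + P1 * (1 - QD N K \<alpha> Pd P10 P01)"

text \<open>Quasi-convexity in the sense of the paper: non-increasing up to some point,
  non-decreasing after it (monotone functions included).\<close>
definition quasi_convex_on :: "real set \<Rightarrow> (real \<Rightarrow> real) \<Rightarrow> bool" where
  "quasi_convex_on S f \<longleftrightarrow>
     (\<exists>x0. (\<forall>x\<in>S. \<forall>y\<in>S. x \<le> y \<and> y \<le> x0 \<longrightarrow> f y \<le> f x) \<and>
           (\<forall>x\<in>S. \<forall>y\<in>S. x0 \<le> x \<and> x \<le> y \<longrightarrow> f x \<le> f y))"

end

theory Submission
  imports Defs
begin

lemma tail_deriv:
  assumes K1: "1 \<le> K" and KN: "K \<le> N"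
  shows "(tail_binom N K has_real_derivative
           (real N * real ((N-1) choose (K-1)) * p^(K-1) * (1-p)^(N-K))) (at p)"
proof -
  define t where "t i = real (N choose i) * (real i * p^(i-1) * (1-p)^(N-i)
                   - real (N-i) * p^i * (1-p)^(N-i-1))" for i
  define h where "h j = real ((N-1) choose j) * p^j * (1-p)^(N-1-j)" for j
  have d: "((\<lambda>p. real (N choose i) * p^i * (1-p)^(N-i)) has_real_derivative t i) (at p)" for i
    unfolding t_def by (auto intro!: derivative_eq_intros simp: algebra_simps)
  have ti: "t i = real N * (h (i-1) - h i)" if "1 \<le> i" "i \<le> N" for i
  proof -
    have e1: "real i * real (N choose i) = real N * real ((N-1) choose (i-1))"
      using times_binomial_minus1_eq[of i N] that by (metis of_nat_mult not_one_le_zero neq0_conv)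
    have e2: "real (N-i) * real (N choose i) = real N * real ((N-1) choose i)"
      using binomial_absorb_comp[of N i] by (metis of_nat_mult)
    have x1: "N - 1 - (i - 1) = N - i" "N - 1 - i = N - i - 1" using that by auto
    have "t i = (real i * real (N choose i)) * p^(i-1) * (1-p)^(N-i)
               - (real (N-i) * real (N choose i)) * p^i * (1-p)^(N-i-1)"
      unfolding t_def by (simp add: algebra_simps)
    also have "\<dots> = real N * (h (i-1) - h i)"
      unfolding e1 e2 h_def x1 by (simp add: algebra_simps)
    finally show ?thesis .
  qed
  have hN: "h N = 0" unfolding h_def using K1 KN by simp
  have S: "(\<Sum>i=K..N. t i) = real N * h (K-1)"
    using KN
  proof (induction K rule: inc_induct)
    case base
    show ?case using ti[of N] K1 KN hN by simp
  next
    case (step n)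
    have "(\<Sum>i=n..N. t i) = t n + (\<Sum>i=Suc n..N. t i)"
      using step.hyps by (simp add: sum.atLeast_Suc_atMost)
    also have "\<dots> = real N * (h (n-1) - h n) + real N * h n"
      using ti[of n] step K1 by simp
    finally show ?case by (simp add: algebra_simps)
  qed
  have "(tail_binom N K has_real_derivative (\<Sum>i=K..N. t i)) (at p)"
    unfolding tail_binom_def[abs_def] by (rule DERIV_sum) (rule d)
  moreover have "(\<Sum>i=K..N. t i) = real N * real ((N-1) choose (K-1)) * p^(K-1) * (1-p)^(N-K)"
    unfolding S h_def using K1 KN by (simp add: algebra_simps)
  ultimately show ?thesis by simp
qed

lemma hderiv:
  fixes a c :: nat
  shows "((\<lambda>p::real. p^a * (1-p)^c) has_real_derivative
          (real a * t^(a-1) * (1-t)^c - real c * t^a * (1-t)^(c-1))) (at t)"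
  by (auto intro!: derivative_eq_intros simp: algebra_simps)


lemma h_inc:
  fixes a c :: nat and x y :: real
  assumes "1 \<le> a" "1 \<le> c" "0 \<le> x" "x \<le> y" "y * (a + c) \<le> a"
  shows "x^a * (1-x)^c \<le> y^a * (1-y)^c"
proof (rule DERIV_nonneg_imp_nondecreasing[OF assms(4)])
  fix s assume s: "x \<le> s" "s \<le> y"
  obtain a' c' where ac: "a = Suc a'" "c = Suc c'" using assms(1,2) by (metis Suc_le_D One_nat_def)
  have s0: "0 \<le> s" using s assms by linarith
  have "s * (a + c) \<le> y * (a+c)" by (rule mult_right_mono) (use s in auto)
  then have s1: "s * (a + c) \<le> a" using assms(5) by linarith
  have "s \<le> 1"
  proof (rule ccontr)
    assume "\<not> s \<le> 1"
    then have "1 * real (a + c) < s * real (a+c)" using assms(1) by (intro mult_strict_right_mono) auto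
    thus False using s1 assms(2) by (simp only: of_nat_add mult_1)
  qed
  have eq: "real a * s^(a-1) * (1-s)^c - real c * s^a * (1-s)^(c-1)
        = s^a' * (1-s)^c' * (real a * (1-s) - real c * s)"
    unfolding ac by (simp only: diff_Suc_1 power_Suc) (simp add: algebra_simps)
  have "0 \<le> real a * (1-s) - real c * s" using s1 by (simp add: algebra_simps)
  then have "0 \<le> s^a' * (1-s)^c' * (real a * (1-s) - real c * s)"
    using s0 \<open>s \<le> 1\<close> by (intro mult_nonneg_nonneg) auto
  moreover have "((\<lambda>p. p^a * (1-p)^c) has_real_derivative (s^a' * (1-s)^c' * (real a * (1-s) - real c * s))) (at s)"
    using hderiv[of a c s] unfolding eq .
  ultimately show "\<exists>y. ((\<lambda>p. p^a * (1-p)^c) has_real_derivative y) (at s) \<and> 0 \<le> y"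
    by blast
qed

lemma h_dec:
  fixes a c :: nat and x y :: real
  assumes "1 \<le> a" "1 \<le> c" "a \<le> x * (a + c)" "x \<le> y" "y \<le> 1"
  shows "y^a * (1-y)^c \<le> x^a * (1-x)^c"
proof -
  have "(\<lambda>p. - (p^a * (1-p)^c)) x \<le> (\<lambda>p. - (p^a * (1-p)^c)) y"
  proof (rule DERIV_nonneg_imp_nondecreasing[OF assms(4)])
    fix s assume s: "x \<le> s" "s \<le> y"
    obtain a' c' where ac: "a = Suc a'" "c = Suc c'" using assms(1,2) by (metis Suc_le_D One_nat_def)
    have "x * (a + c) \<le> s * (a+c)" by (rule mult_right_mono) (use s in auto)
    then have s1: "a \<le> s * (a + c)" using assms(3) by linarith
    have "0 \<le> s"
    proof (rule ccontr)
      assume "\<not> 0 \<le> s" then have "s * real (a+c) \<le> 0" by (simp add: mult_nonpos_nonneg)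
      thus False using s1 assms(1) by simp
    qed
    have "s \<le> 1" using s assms by linarith
    have eq: "- (real a * s^(a-1) * (1-s)^c - real c * s^a * (1-s)^(c-1))
          = s^a' * (1-s)^c' * (real c * s - real a * (1-s))"
      unfolding ac by (simp only: diff_Suc_1 power_Suc) (simp add: algebra_simps)
    have "0 \<le> real c * s - real a * (1-s)" using s1 by (simp add: algebra_simps)
    then have "0 \<le> s^a' * (1-s)^c' * (real c * s - real a * (1-s))"
      using \<open>0 \<le> s\<close> \<open>s \<le> 1\<close> by (intro mult_nonneg_nonneg) auto
    moreover have "((\<lambda>p. - (p^a * (1-p)^c)) has_real_derivative (s^a' * (1-s)^c' * (real c * s - real a * (1-s)))) (at s)"
      using DERIV_minus[OF hderiv[of a c s]] unfolding eq .
    ultimately show "\<exists>d. ((\<lambda>p. - (p^a * (1-p)^c)) has_real_derivative d) (at s) \<and> 0 \<le> d"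
      by blast
  qed
  thus ?thesis by simp
qed

theorem lemma2:
  fixes N :: nat and P0 P1 Pf Pd \<alpha> P01 :: real
  assumes "N \<ge> 2"
    and "0 < P0" "P0 < 1" "0 < P1" "P1 < 1" "P0 + P1 = 1"
    and "0 < Pf" "Pf < Pd" "Pd < 1"
    and "0 \<le> \<alpha>" "\<alpha> \<le> 1"
    and "\<alpha> < min (1/2 - Pf) (1 - (real N / (2 * real N - 2)) / Pd)"
    and "0 \<le> P01" "P01 \<le> 1"
  shows "quasi_convex_on {0..1}
           (\<lambda>P10. PE P0 P1 N (nat \<lceil>(real N + 1) / 2\<rceil>) \<alpha> Pf Pd P10 P01)"
proof -
  define K where "K = nat \<lceil>(real N + 1) / 2\<rceil>"
  have rN: "real N = 2 * real (N div 2) + real (N mod 2)"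
    by (metis div_mult_mod_eq of_nat_add of_nat_mult of_nat_numeral mult.commute)
  have md: "N mod 2 = 0 \<or> N mod 2 = 1" by auto
  have "\<lceil>(real N + 1) / 2\<rceil> = int (N div 2) + 1"
    unfolding ceiling_eq_iff using rN md by auto
  then have Kd: "K = N div 2 + 1" unfolding K_def by simp
  have al1: "\<alpha> < 1/2 - Pf" and al2: "\<alpha> < 1 - (real N / (2 * real N - 2)) / Pd"
    using assms(12) by auto
  have N3: "N \<ge> 3"
  proof (rule ccontr)
    assume "\<not> N \<ge> 3" then have "N = 2" using assms(1) by auto
    then have "\<alpha> < 1 - 1 / Pd" using al2 by simp
    moreover have "1 < 1 / Pd" using assms(7,8,9) by simp
    ultimately show False using assms(10) by linarith
  qed
  define a where "a = K - 1"
  define c where "c = N - K"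
  have a1: "1 \<le> a" and c1: "1 \<le> c" using N3 Kd unfolding a_def c_def by auto
  have acN: "real (a + c) = real N - 1" using N3 Kd unfolding a_def c_def by auto
  have a_lo: "real N - 1 \<le> 2 * real a" and a_hi: "2 * real a \<le> real N"
    using rN md Kd unfolding a_def by auto
  define p0 where "p0 x = pi10 \<alpha> Pf x P01" for x
  define p1 where "p1 x = pi11 \<alpha> Pd x P01" for x
  define hh where "hh p = p^a * (1-p)^c" for p :: real
  define C where "C = real N * real ((N-1) choose (K-1))"
  define A where "A = P0 * (\<alpha> * (1 - Pf))"
  define B where "B = P1 * (\<alpha> * (1 - Pd))"
  define s where "s x = A * hh (p0 x) - B * hh (p1 x)" for x
  define f where "f = (\<lambda>P10. PE P0 P1 N K \<alpha> Pf Pd P10 P01)"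
  have C0: "0 \<le> C" unfolding C_def by simp
  have A0: "0 \<le> A" unfolding A_def using assms by simp
  have B0: "0 \<le> B" unfolding B_def using assms by simp
  have K1: "1 \<le> K" "K \<le> N" using Kd N3 by auto
  have deriv: "(f has_real_derivative C * s x) (at x)" for x
  proof -
    have d0: "(p0 has_real_derivative \<alpha>*(1-Pf)) (at x)"
      unfolding p0_def[abs_def] pi10_def by (auto intro!: derivative_eq_intros)
    have d1: "(p1 has_real_derivative \<alpha>*(1-Pd)) (at x)"
      unfolding p1_def[abs_def] pi11_def by (auto intro!: derivative_eq_intros)
    have t0: "((\<lambda>x. tail_binom N K (p0 x)) has_real_derivative C * hh (p0 x) * (\<alpha>*(1-Pf))) (at x)"
      using DERIV_chain2[OF tail_deriv[OF K1] d0] unfolding C_def hh_def a_def c_def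
      by (simp add: mult.assoc)
    have t1: "((\<lambda>x. tail_binom N K (p1 x)) has_real_derivative C * hh (p1 x) * (\<alpha>*(1-Pd))) (at x)"
      using DERIV_chain2[OF tail_deriv[OF K1] d1] unfolding C_def hh_def a_def c_def
      by (simp add: mult.assoc)
    have "f = (\<lambda>x. P0 * tail_binom N K (p0 x) + P1 * (1 - tail_binom N K (p1 x)))"
      unfolding f_def PE_def QF_def QD_def p0_def p1_def by simp
    moreover have "((\<lambda>x. P0 * tail_binom N K (p0 x) + P1 * (1 - tail_binom N K (p1 x)))
        has_real_derivative P0 * (C * hh (p0 x) * (\<alpha>*(1-Pf))) + P1 * (0 - C * hh (p1 x) * (\<alpha>*(1-Pd)))) (at x)"
      by (intro DERIV_add DERIV_cmult DERIV_diff DERIV_const t0 t1)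
    moreover have "P0 * (C * hh (p0 x) * (\<alpha>*(1-Pf))) + P1 * (0 - C * hh (p1 x) * (\<alpha>*(1-Pd))) = C * s x"
      unfolding s_def A_def B_def by (simp add: algebra_simps)
    ultimately show ?thesis by simp
  qed
  have cont: "continuous_on T f" for T
    by (rule DERIV_continuous_on) (rule has_field_derivative_at_within[OF deriv])
  have p0e: "p0 x = Pf + \<alpha> * (x * (1 - Pf) - P01 * Pf)" for x
    unfolding p0_def pi10_def by (simp add: algebra_simps)
  have p1e: "p1 x = Pd + \<alpha> * (x * (1 - Pd) - P01 * Pd)" for x
    unfolding p1_def pi11_def by (simp add: algebra_simps)
  have p0mono: "p0 x \<le> p0 y" if "x \<le> y" for x y
    unfolding p0e using that assms by (intro add_left_mono mult_left_mono) (auto intro: mult_right_mono)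
  have p1mono: "p1 x \<le> p1 y" if "x \<le> y" for x y
    unfolding p1e using that assms by (intro add_left_mono mult_left_mono) (auto intro: mult_right_mono)
  have p0lo: "0 \<le> p0 x" if "0 \<le> x" for x
  proof -
    have "0 \<le> \<alpha> * (x * (1 - Pf) + (1 - P01) * Pf)" using that assms by (intro mult_nonneg_nonneg add_nonneg_nonneg) auto
    moreover have "\<alpha> * Pf \<le> Pf" using assms by (simp add: mult_left_le_one_le)
    ultimately show ?thesis unfolding p0e by (simp add: algebra_simps)
  qed
  have p0hi: "p0 x \<le> 1/2" if "0 \<le> x" "x \<le> 1" for x
  proof -
    have "x*(1-Pf) \<le> 1" using that assms by (intro mult_le_one) auto
    moreover have "0 \<le> P01 * Pf" using assms by simp
    ultimately have "x * (1 - Pf) - P01 * Pf \<le> 1" by linarith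
    then have "\<alpha> * (x * (1 - Pf) - P01 * Pf) \<le> \<alpha> * 1"
      using assms by (intro mult_left_mono) auto
    thus ?thesis unfolding p0e using al1 by linarith
  qed
  have p1hi: "p1 x \<le> 1" if "x \<le> 1" for x
  proof -
    have "x * (1 - Pd) \<le> 1 - Pd" using that assms by (simp add: mult_left_le_one_le)
    moreover have "0 \<le> P01 * Pd" using assms by simp
    ultimately have "x * (1 - Pd) - P01 * Pd \<le> 1 - Pd" by linarith
    then have "\<alpha> * (x * (1 - Pd) - P01 * Pd) \<le> \<alpha> * (1 - Pd)"
      using assms(10) by (rule mult_left_mono)
    moreover have "\<alpha> * (1 - Pd) \<le> 1 - Pd" using assms by (simp add: mult_left_le_one_le)
    ultimately show ?thesis unfolding p1e by linarith
  qed
  have p1lo: "(1 - \<alpha>) * Pd \<le> p1 x" if "0 \<le> x" for x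
  proof -
    have "0 \<le> \<alpha> * (x * (1 - Pd) + (1 - P01) * Pd)" using that assms by (intro mult_nonneg_nonneg add_nonneg_nonneg) auto
    thus ?thesis unfolding p1e by (simp add: algebra_simps)
  qed
  have Pd0: "0 < Pd" using assms(7,8) by linarith
  have "(real N / (2 * real N - 2)) / Pd < 1 - \<alpha>" using al2 by linarith
  then have mPd: "real N / (2 * real N - 2) < (1 - \<alpha>) * Pd"
    using Pd0 by (simp only: pos_divide_less_eq)
  have "real N < (1 - \<alpha>) * Pd * (2 * real N - 2)"
    using mPd N3 by (simp add: divide_less_eq)
  then have p1big: "real a \<le> p1 x * real (a + c)" if "0 \<le> x" for x
  proof -
    have "(1 - \<alpha>) * Pd * (real N - 1) \<le> p1 x * (real N - 1)"
      using p1lo[OF that] N3 by (intro mult_right_mono) auto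
    moreover have "(1-\<alpha>)*Pd*(2*real N - 2) = 2*((1-\<alpha>)*Pd*(real N - 1))" by (simp add: algebra_simps)
    moreover have "p1 x * real (a+c) = p1 x * (real N - 1)" using acN by simp
    ultimately show ?thesis using \<open>real N < _\<close> a_hi by linarith
  qed
  have p0small: "p0 x * real (a + c) \<le> real a" if "0 \<le> x" "x \<le> 1" for x
  proof -
    have "p0 x * (real N - 1) \<le> 1/2 * (real N - 1)"
      using p0hi[OF that] N3 by (intro mult_right_mono) auto
    thus ?thesis using a_lo acN by simp
  qed
  have up: "0 < s y" if "0 \<le> x" "x \<le> y" "y \<le> 1" "0 < s x" for x y
  proof -
    have "hh (p0 x) \<le> hh (p0 y)" unfolding hh_def
      using h_inc[OF a1 c1 p0lo p0mono[OF that(2)] p0small] that by auto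
    moreover have "hh (p1 y) \<le> hh (p1 x)" unfolding hh_def
      using h_dec[OF a1 c1 p1big p1mono[OF that(2)] p1hi] that by auto
    ultimately have "A * hh (p0 x) \<le> A * hh (p0 y)" "B * hh (p1 y) \<le> B * hh (p1 x)"
      using A0 B0 by (auto intro: mult_left_mono)
    thus ?thesis using that(4) unfolding s_def by linarith
  qed
  have decr: "f y \<le> f x" if "x \<le> y" "\<And>t. x < t \<Longrightarrow> t < y \<Longrightarrow> s t \<le> 0" for x y
    using DERIV_nonpos_imp_decreasing_open[OF that(1) _ cont] deriv that(2) C0
    by (meson mult_nonneg_nonpos)
  have incr: "f x \<le> f y" if "x \<le> y" "\<And>t. x < t \<Longrightarrow> t < y \<Longrightarrow> 0 < s t" for x y
    using DERIV_nonneg_imp_increasing_open[OF that(1) _ cont] deriv that(2) C0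
    by (meson less_imp_le mult_nonneg_nonneg)
  define S where "S = {x \<in> {0..1}. 0 < s x}"
  have "quasi_convex_on {0..1} f"
  proof (cases "S = {}")
    case True
    show ?thesis unfolding quasi_convex_on_def
    proof (intro exI[of _ 1] conjI ballI impI)
      fix x y :: real assume "x \<in> {0..1}" "y \<in> {0..1}" "x \<le> y \<and> y \<le> 1"
      then show "f y \<le> f x"
        using True unfolding S_def by (intro decr) (auto simp: not_less)
    next
      fix x y :: real assume "x \<in> {0..1}" "y \<in> {0..1}" "1 \<le> x \<and> x \<le> y"
      then have "x = y" by auto
      then show "f x \<le> f y" by simp
    qed
  next
    case False
    have bdd: "bdd_below S" unfolding S_def by (rule bdd_belowI[of _ 0]) auto
    define x0 where "x0 = Inf S"
    have below: "s t \<le> 0" if "t \<in> {0..1}" "t < x0" for t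
    proof (rule ccontr)
      assume "\<not> s t \<le> 0" then have "t \<in> S" unfolding S_def using that by auto
      then have "x0 \<le> t" unfolding x0_def using bdd by (simp add: cInf_lower)
      thus False using that by simp
    qed
    have above: "0 < s t" if tI: "t \<in> {0..1}" and tx: "x0 < t" for t
    proof -
      obtain u where "u \<in> S" "u < t" using tx False bdd unfolding x0_def by (auto simp: cInf_less_iff)
      thus ?thesis using up[of u t] tI unfolding S_def by auto
    qed
    show ?thesis unfolding quasi_convex_on_def
    proof (intro exI[of _ x0] conjI ballI impI)
      fix x y :: real assume "x \<in> {0..1}" "y \<in> {0..1}" "x \<le> y \<and> y \<le> x0"
      then show "f y \<le> f x" by (intro decr) (auto intro!: below)
    next
      fix x y :: real assume "x \<in> {0..1}" "y \<in> {0..1}" "x0 \<le> x \<and> x \<le> y"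
      then show "f x \<le> f y" by (intro incr) (auto intro!: above)
    qed
  qed
  then show ?thesis unfolding f_def K_def .
qed
end
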